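(* For each $\alpha \in (0,1)$ the map $T_\alpha$ is an AFN-map.
   Context: For $\alpha \in (0,1)$ let $D_\alpha = \bigcup_{n \ge 1} \big[ \frac{1}{n+\alpha}, \frac1n \big]$, $D_\alpha^{\mathsf c} = [0,1]\setminus D_\alpha$, $I_\alpha = [\min\{\alpha,1-\alpha\},1]$, and $T_\alpha : I_\alpha \to I_\alpha$, $T_\alpha(x) = \frac1x - \lfloor \frac1x \rfloor$ if $x \in D_\alpha^{\mathsf c}$, $T_\alpha(x) = 1 + \lfloor \frac1x \rfloor - \frac1x$ if $x \in D_\alpha$. Let $X$ be a finite union of bounded intervals. A map $T:X\to X$ is an AFN-map if there is a finite partition $\mathcal P$ of $X$ (up to finitely many points) into non-empty open intervals $I_i$ such that each restriction $T|_{I_i}$ is continuous, strictly monotone and twice differentiable, and: (A) (Adler's condition) $T''/(T')^2$ is bounded on $\bigcup_i I_i$; (F) (finite image condition) the collection $\{T(I_i): I_i\in\mathcal P\}$ is finite; (N) there is a finite set $\mathcal Z\subseteq\mathcal P$ such that each $Z\in\mathcal Z$ has an indifferent fixed point $x_Z$ (an endpoint of $Z$), i.e. $\lim_{x\to x_Z, x\in Z}T(x)=x_Z$ and $\lim_{x\to x_Z,x\in Z}T'(x)=1$, with $T'$ decreasing on $(-\infty,x_Z)\cap Z$ and increasing on $(x_Z,\infty)\cap Z$, and $T$ is uniformly expanding on sets bounded away from $\{x_Z : Z\in\mathcal Z\}$. *)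

theory Defs
  imports "HOL-Analysis.Analysis"
begin

definition D_alpha :: "real \<Rightarrow> real set" where
  "D_alpha \<alpha> = (\<Union>n\<in>{1::nat..}. {1 / (real n + \<alpha>) .. 1 / real n})"

definition I_alpha :: "real \<Rightarrow> real set" where
  "I_alpha \<alpha> = {min \<alpha> (1 - \<alpha>) .. 1}"

definition T_alpha :: "real \<Rightarrow> real \<Rightarrow> real" where
  "T_alpha \<alpha> x =
     (if x \<in> D_alpha \<alpha> then 1 + of_int \<lfloor>1 / x\<rfloor> - 1 / x
      else 1 / x - of_int \<lfloor>1 / x\<rfloor>)"

definition finite_union_bounded_intervals :: "real set \<Rightarrow> bool" where
  "finite_union_bounded_intervals X \<longleftrightarrow>
     (\<exists>S. finite S \<and> (\<forall>J\<in>S. is_interval J \<and> bounded J) \<and> X = \<Union>S)"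

definition AFN_map :: "real set \<Rightarrow> (real \<Rightarrow> real) \<Rightarrow> bool" where
  "AFN_map X T \<longleftrightarrow>
     finite_union_bounded_intervals X \<and> T ` X \<subseteq> X \<and>
     (\<exists>P :: real set set.
        finite P \<and>
        (\<forall>I\<in>P. \<exists>a b. a < b \<and> I = {a<..<b}) \<and>
        (\<forall>I\<in>P. \<forall>J\<in>P. I \<noteq> J \<longrightarrow> I \<inter> J = {}) \<and>
        \<Union>P \<subseteq> X \<and> finite (X - \<Union>P) \<and>
        (\<forall>I\<in>P. continuous_on I T \<and>
           ((\<forall>x\<in>I. \<forall>y\<in>I. x < y \<longrightarrow> T x < T y) \<or>
            (\<forall>x\<in>I. \<forall>y\<in>I. x < y \<longrightarrow> T x > T y)) \<and>
           (\<forall>x\<in>I. T differentiable (at x) \<and> (deriv T) differentiable (at x))) \<and>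
        \<comment> \<open>(A) Adler's condition\<close>
        (\<exists>C. \<forall>x\<in>\<Union>P. \<bar>deriv (deriv T) x / (deriv T x)\<^sup>2\<bar> \<le> C) \<and>
        \<comment> \<open>(F) finite image condition\<close>
        finite ((\<lambda>I. T ` I) ` P) \<and>
        \<comment> \<open>(N) indifferent fixed points and uniform expansion away from them\<close>
        (\<exists>Zs \<subseteq> P. \<exists>xZ :: real set \<Rightarrow> real.
           (\<forall>Z\<in>Zs. (xZ Z = Inf Z \<or> xZ Z = Sup Z) \<and>
              (T \<longlongrightarrow> xZ Z) (at (xZ Z) within Z) \<and>
              (deriv T \<longlongrightarrow> 1) (at (xZ Z) within Z) \<and>
              (\<forall>x\<in>Z. \<forall>y\<in>Z. x \<le> y \<and> y < xZ Z \<longrightarrow> deriv T y \<le> deriv T x) \<and>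
              (\<forall>x\<in>Z. \<forall>y\<in>Z. xZ Z < x \<and> x \<le> y \<longrightarrow> deriv T x \<le> deriv T y)) \<and>
           (\<forall>\<epsilon>>0. \<exists>\<rho>>1. \<forall>x\<in>\<Union>P.
              (\<forall>Z\<in>Zs. \<bar>x - xZ Z\<bar> \<ge> \<epsilon>) \<longrightarrow> \<bar>deriv T x\<bar> \<ge> \<rho>)))"

end

theory Submission
  imports Defs
begin

lemma floor_eq_n:
  fixes t :: real and n :: nat
  assumes "real n \<le> t" "t < real n + 1"
  shows "\<lfloor>t\<rfloor> = int n"
  using assms by linarith

lemma T_PD:
  assumes "0 < \<alpha>" "\<alpha> < 1" "1 \<le> n" "0 < x" "real n < 1/x" "1/x < real n + \<alpha>"
  shows "T_alpha \<alpha> x = (-1) / x + (1 + real n)"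
proof -
  have "1 < (real n + \<alpha>) * x" using assms by (simp add: field_simps)
  then have "1 / (real n + \<alpha>) \<le> x" using assms by (simp add: divide_le_eq mult.commute)
  moreover have "x \<le> 1 / real n" using assms by (simp add: field_simps)
  ultimately have "x \<in> {1 / (real n + \<alpha>) .. 1 / real n}" by simp
  then have "x \<in> D_alpha \<alpha>" unfolding D_alpha_def using assms(3) by auto
  moreover have "\<lfloor>1/x\<rfloor> = int n" using assms by (intro floor_eq_n) auto
  ultimately show ?thesis unfolding T_alpha_def by simp
qed

lemma T_PC:
  assumes "0 < \<alpha>" "\<alpha> < 1" "0 < x" "real n + \<alpha> < 1/x" "1/x < real n + 1"
  shows "T_alpha \<alpha> x = 1 / x + (- real n)"
proof -
  have "x \<notin> D_alpha \<alpha>"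
  proof
    assume "x \<in> D_alpha \<alpha>"
    then obtain k :: nat where k: "1 \<le> k" "1 / (real k + \<alpha>) \<le> x" "x \<le> 1 / real k"
      unfolding D_alpha_def by auto
    have "real k \<le> 1/x" using k assms by (simp add: field_simps)
    moreover have "1/x \<le> real k + \<alpha>" using k assms
      by (simp add: field_simps)
    ultimately have "real k < real (n + 1)" "real n < real k" using assms by auto
    then have "k < n + 1" "n < k" by (simp only: of_nat_less_iff)+
    then show False by simp
  qed
  moreover have "\<lfloor>1/x\<rfloor> = int n" using assms by (intro floor_eq_n) auto
  ultimately show ?thesis unfolding T_alpha_def by simp
qed

lemma T_maps:
  assumes "0 < \<alpha>" "\<alpha> < 1" "x \<in> I_alpha \<alpha>"
  shows "T_alpha \<alpha> x \<in> I_alpha \<alpha>"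
proof -
  have x: "min \<alpha> (1 - \<alpha>) \<le> x" "x \<le> 1" using assms unfolding I_alpha_def by auto
  then have x0: "0 < x" using assms by linarith
  have "1 \<le> 1/x" using x x0 by (simp add: field_simps)
  show ?thesis
  proof (cases "x \<in> D_alpha \<alpha>")
    case True
    then obtain k :: nat where k: "1 \<le> k" "1 / (real k + \<alpha>) \<le> x" "x \<le> 1 / real k"
      unfolding D_alpha_def by auto
    have "real k \<le> 1/x" using k x0 by (simp add: field_simps)
    moreover have "1/x \<le> real k + \<alpha>" using k assms x0
      by (simp add: field_simps)
    ultimately have "\<lfloor>1/x\<rfloor> = int k" using assms by (intro floor_eq_n) auto
    then have "T_alpha \<alpha> x = 1 + real k - 1/x" unfolding T_alpha_def using True by simp
    then show ?thesis unfolding I_alpha_def using \<open>real k \<le> 1/x\<close> \<open>1/x \<le> real k + \<alpha>\<close>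
      by auto
  next
    case False
    define n where "n = nat \<lfloor>1/x\<rfloor>"
    have n: "real n \<le> 1/x" "1/x < real n + 1" "1 \<le> n" using \<open>1 \<le> 1/x\<close> unfolding n_def
      by linarith+
    have "\<not> 1/x \<le> real n + \<alpha>"
    proof
      assume h: "1/x \<le> real n + \<alpha>"
      have "1 \<le> (real n + \<alpha>) * x" using h x0 by (simp add: field_simps)
      then have "1 / (real n + \<alpha>) \<le> x" using assms by (simp add: divide_le_eq mult.commute)
      moreover have "x \<le> 1 / real n" using n x0 by (simp add: field_simps)
      ultimately have "x \<in> {1 / (real n + \<alpha>) .. 1 / real n}" by simp
      then have "x \<in> D_alpha \<alpha>" unfolding D_alpha_def using n(3) by auto
      then show False using False by simp
    qed
    moreover have "\<lfloor>1/x\<rfloor> = int n" using n by (intro floor_eq_n) auto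
    ultimately have "T_alpha \<alpha> x = 1/x - real n" "real n + \<alpha> < 1/x"
      unfolding T_alpha_def using False by auto
    then show ?thesis unfolding I_alpha_def using n by auto
  qed
qed

lemma piece_props:
  fixes T :: "real \<Rightarrow> real"
  assumes I: "I = {a<..<b}" and a0: "0 \<le> a" and s: "s = 1 \<or> s = -1"
    and eq: "\<And>y. y \<in> I \<Longrightarrow> T y = s / y + c"
  shows "continuous_on I T"
    and "(\<forall>x\<in>I. \<forall>y\<in>I. x < y \<longrightarrow> T x < T y) \<or> (\<forall>x\<in>I. \<forall>y\<in>I. x < y \<longrightarrow> T x > T y)"
    and "\<And>x. x \<in> I \<Longrightarrow> (T has_real_derivative (- s / x^2)) (at x)"
    and "\<And>x. x \<in> I \<Longrightarrow> deriv T x = - s / x^2"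
    and "\<And>x. x \<in> I \<Longrightarrow> ((deriv T) has_real_derivative (2 * s / x^3)) (at x)"
    and "\<And>x. x \<in> I \<Longrightarrow> deriv (deriv T) x = 2 * s / x^3"
proof -
  have pos: "\<And>x. x \<in> I \<Longrightarrow> 0 < x" using I a0 by auto
  have op: "open I" using I by simp
  show D1: "(T has_real_derivative (- s / x^2)) (at x)" if "x \<in> I" for x
  proof (rule has_field_derivative_transform_within_open[OF _ op that])
    show "((\<lambda>y. s / y + c) has_real_derivative (- s / x^2)) (at x)"
      using pos[OF that] by (auto intro!: derivative_eq_intros simp: power2_eq_square field_simps)
    show "\<And>y. y \<in> I \<Longrightarrow> s / y + c = T y" using eq by simp
  qed
  show D1': "deriv T x = - s / x^2" if "x \<in> I" for x
    using D1[OF that] by (rule DERIV_imp_deriv)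
  show D2: "((deriv T) has_real_derivative (2 * s / x^3)) (at x)" if "x \<in> I" for x
  proof (rule has_field_derivative_transform_within_open[OF _ op that])
    show "((\<lambda>y. - s / y^2) has_real_derivative (2 * s / x^3)) (at x)"
      using pos[OF that] by (auto intro!: derivative_eq_intros simp: power2_eq_square power3_eq_cube field_simps)
    show "\<And>y. y \<in> I \<Longrightarrow> - s / y^2 = deriv T y" using D1' by simp
  qed
  show "deriv (deriv T) x = 2 * s / x^3" if "x \<in> I" for x
    using D2[OF that] by (rule DERIV_imp_deriv)
  show "continuous_on I T"
    using D1 by (meson DERIV_isCont continuous_at_imp_continuous_on)
  show "(\<forall>x\<in>I. \<forall>y\<in>I. x < y \<longrightarrow> T x < T y) \<or> (\<forall>x\<in>I. \<forall>y\<in>I. x < y \<longrightarrow> T x > T y)"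
  proof (cases "s = 1")
    case True
    then show ?thesis using eq pos by (auto intro!: disjI2 simp: divide_strict_left_mono)
  next
    case False
    then have "s = -1" using s by simp
    then show ?thesis using eq pos by (auto intro!: disjI1 simp: divide_strict_left_mono)
  qed
qed

theorem lemma2p2:
  fixes \<alpha> :: real
  assumes "0 < \<alpha>" and "\<alpha> < 1"
  shows "AFN_map (I_alpha \<alpha>) (T_alpha \<alpha>)"
proof -
  define m where "m = min \<alpha> (1 - \<alpha>)"
  define T where "T = T_alpha \<alpha>"
  define X where "X = I_alpha \<alpha>"
  define N where "N = nat \<lceil>1/m\<rceil>"
  define PD where "PD n = {x. m < x \<and> real n < 1/x \<and> 1/x < real n + \<alpha>}" for n :: nat
  define PC where "PC n = {x. m < x \<and> real n + \<alpha> < 1/x \<and> 1/x < real n + 1}" for n :: nat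
  define P where "P = (PD ` {1..N} \<union> PC ` {1..N}) - {{}}"
  have m0: "0 < m" "m \<le> 1/2" using assms unfolding m_def by (auto simp: min_def)
  have X: "X = {m..1}" unfolding X_def I_alpha_def m_def by simp
  have "2 \<le> 1/m" using m0 by (simp add: field_simps)
  then have N1: "1 \<le> N" unfolding N_def by linarith
  have hPDint: "PD n = {max m (1/(real n+\<alpha>))<..<1/real n}" if "1 \<le> n" for n
  proof (intro set_eqI iffI)
    fix x assume "x \<in> PD n"
    then have x: "m < x" "real n < 1/x" "1/x < real n + \<alpha>" unfolding PD_def by auto
    have x0: "0 < x" using x m0 by linarith
    have "1 < (real n + \<alpha>) * x" using x x0 by (simp add: field_simps)
    then have "1 / (real n + \<alpha>) < x" using assms by (simp add: divide_less_eq mult.commute)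
    moreover have "x < 1 / real n" using x x0 that by (simp add: field_simps)
    ultimately show "x \<in> {max m (1/(real n+\<alpha>))<..<1/real n}" using x by simp
  next
    fix x assume "x \<in> {max m (1/(real n+\<alpha>))<..<1/real n}"
    then have x: "m < x" "1/(real n+\<alpha>) < x" "x < 1/real n" by auto
    have x0: "0 < x" using x m0 by linarith
    have "1 < (real n + \<alpha>) * x" using x assms by (simp add: divide_less_eq mult.commute)
    then have "1/x < real n + \<alpha>" using x0 by (simp add: field_simps)
    moreover have "real n < 1/x" using x x0 that by (simp add: field_simps)
    ultimately show "x \<in> PD n" using x unfolding PD_def by simp
  qed
  have hPCint: "PC n = {max m (1/(real n+1))<..<1/(real n+\<alpha>)}" for n
  proof (intro set_eqI iffI)
    fix x assume "x \<in> PC n"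
    then have x: "m < x" "real n + \<alpha> < 1/x" "1/x < real n + 1" unfolding PC_def by auto
    have x0: "0 < x" using x m0 by linarith
    have "1 < (real n + 1) * x" using x x0 by (simp add: field_simps)
    then have "1 / (real n + 1) < x" by (simp add: divide_less_eq mult.commute)
    moreover have "(real n + \<alpha>) * x < 1" using x x0 by (simp add: field_simps)
    then have "x < 1 / (real n + \<alpha>)" using assms by (simp add: less_divide_eq mult.commute)
    ultimately show "x \<in> {max m (1/(real n+1))<..<1/(real n+\<alpha>)}" using x by simp
  next
    fix x assume "x \<in> {max m (1/(real n+1))<..<1/(real n+\<alpha>)}"
    then have x: "m < x" "1/(real n+1) < x" "x < 1/(real n+\<alpha>)" by auto
    have x0: "0 < x" using x m0 by linarith
    have "1 < (real n + 1) * x" using x by (simp add: divide_less_eq mult.commute)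
    then have "1/x < real n + 1" using x0 by (simp add: field_simps)
    moreover have "(real n + \<alpha>) * x < 1" using x assms by (simp add: less_divide_eq mult.commute)
    then have "real n + \<alpha> < 1/x" using x0 by (simp add: field_simps)
    ultimately show "x \<in> PC n" using x unfolding PC_def by simp
  qed
  have PDT: "T x = (-1) / x + (1 + real n)" if "x \<in> PD n" "1 \<le> n" for x n
    using that m0 unfolding PD_def T_def by (intro T_PD assms) auto
  have PCT: "T x = 1 / x + (- real n)" if "x \<in> PC n" for x n
    using that m0 unfolding PC_def T_def by (intro T_PC assms) auto
  have PDfl: "\<lfloor>1/x\<rfloor> = int n" if "x \<in> PD n" for x n
    using that assms unfolding PD_def by (intro floor_eq_n) auto
  have PCfl: "\<lfloor>1/x\<rfloor> = int n" if "x \<in> PC n" for x n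
    using that assms unfolding PC_def by (intro floor_eq_n) auto
  have pieces: "\<exists>a b s c. I = {a<..<b} \<and> 0 \<le> a \<and> a < b \<and> (s = 1 \<or> s = -1) \<and>
      (\<forall>y\<in>I. T y = s / y + c)" if "I \<in> P" for I
  proof -
    from that obtain n where n: "n \<in> {1..N}" "I = PD n \<or> I = PC n" "I \<noteq> {}"
      unfolding P_def by blast
    show ?thesis
    proof (cases "I = PD n")
      case True
      then have "I = {max m (1/(real n+\<alpha>))<..<1/real n}" using hPDint n by auto
      moreover have "max m (1/(real n+\<alpha>)) < 1/real n" using n(3) calculation by auto
      moreover have "0 \<le> max m (1/(real n+\<alpha>))" using m0 by auto
      moreover have "\<forall>y\<in>I. T y = (-1) / y + (1 + real n)" using PDT True n by auto
      ultimately show ?thesis by blast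
    next
      case False
      then have I: "I = PC n" using n by auto
      then have "I = {max m (1/(real n+1))<..<1/(real n+\<alpha>)}" using hPCint by auto
      moreover have "max m (1/(real n+1)) < 1/(real n+\<alpha>)" using n(3) calculation by auto
      moreover have "0 \<le> max m (1/(real n+1))" using m0 by auto
      moreover have "\<forall>y\<in>I. T y = 1 / y + (- real n)" using PCT I by auto
      ultimately show ?thesis by blast
    qed
  qed
  have inX: "m < x \<and> x < 1" if "x \<in> \<Union>P" for x
  proof -
    from that obtain I where I: "I \<in> P" "x \<in> I" by blast
    from I(1) obtain n where "n \<in> {1..N}" "I = PD n \<or> I = PC n" unfolding P_def by blast
    then have "x \<in> PD n \<or> x \<in> PC n" "1 \<le> n" using I(2) by auto
    then have "m < x" "1 < 1/x" using assms unfolding PD_def PC_def by auto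
    moreover then have "0 < x" using m0 by linarith
    ultimately show ?thesis by (simp add: field_simps)
  qed
  have dT: "\<bar>deriv T x\<bar> = 1 / x^2 \<and> \<bar>deriv (deriv T) x / (deriv T x)^2\<bar> \<le> 2" if "x \<in> \<Union>P" for x
  proof -
    from that obtain I where I: "I \<in> P" "x \<in> I" by auto
    from pieces[OF I(1)] obtain a b s c where abs: "I = {a<..<b}" "0 \<le> a" "a < b" "s = 1 \<or> s = -1"
      "\<forall>y\<in>I. T y = s / y + c" by blast
    have d1: "deriv T x = - s / x^2" using piece_props(4)[OF abs(1,2,4)] abs(5) I(2) by auto
    have d2: "deriv (deriv T) x = 2 * s / x^3" using piece_props(6)[OF abs(1,2,4)] abs(5) I(2) by auto
    have x: "0 < x" "x < 1" using inX that m0 by force+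
    have "\<bar>deriv T x\<bar> = 1 / x^2" using d1 abs(4) by auto
    moreover have "deriv (deriv T) x / (deriv T x)^2 = 2 * s * x"
      unfolding d1 d2 using x abs(4) by (auto simp: field_simps power2_eq_square power3_eq_cube)
    then have "\<bar>deriv (deriv T) x / (deriv T x)^2\<bar> \<le> 2" using abs(4) x by auto
    ultimately show ?thesis by simp
  qed
  define Z1 where "Z1 = PD 1"
  have Z1: "Z1 = {max m (1/(1+\<alpha>))<..<1}" unfolding Z1_def using hPDint[of 1] by simp
  have Z1lt: "max m (1/(1+\<alpha>)) < 1" using m0 assms by (simp add: field_simps)
  have Z1P: "Z1 \<in> P" unfolding P_def Z1_def using N1 Z1 Z1lt by (auto simp: Z1_def)
  have TZ1: "T y = 2 - 1/y" if "y \<in> Z1" for y using PDT[of y 1] that unfolding Z1_def by simp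
  have dTZ1: "deriv T y = 1 / y^2" if "y \<in> Z1" for y
  proof -
    have e: "\<And>y. y \<in> Z1 \<Longrightarrow> T y = (-1) / y + 2" using TZ1 by simp
    have "0 \<le> max m (1/(1+\<alpha>))" using m0 by simp
    from piece_props(4)[OF Z1 this _ e that] show ?thesis by simp
  qed
  have "finite_union_bounded_intervals X"
    unfolding finite_union_bounded_intervals_def X
    by (intro exI[of _ "{{m..1}}"]) (auto simp: is_interval_cc)
  have "T ` X \<subseteq> X" unfolding T_def X_def using T_maps assms by auto
  show ?thesis
    unfolding AFN_map_def X_def[symmetric] T_def[symmetric]
    apply (intro conjI)
      apply (rule \<open>finite_union_bounded_intervals X\<close>)
     apply (rule \<open>T ` X \<subseteq> X\<close>)
    apply (rule exI[of _ P])
  proof (intro conjI)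
    show "finite P" unfolding P_def by simp
    then show "finite ((\<lambda>I. T ` I) ` P)" by simp
    show "\<forall>I\<in>P. \<exists>a b. a < b \<and> I = {a<..<b}" using pieces by blast
    show "\<forall>I\<in>P. \<forall>J\<in>P. I \<noteq> J \<longrightarrow> I \<inter> J = {}"
    proof (intro ballI impI)
      fix I J assume IJ: "I \<in> P" "J \<in> P" "I \<noteq> J"
      from IJ obtain n where n: "I = PD n \<or> I = PC n" unfolding P_def by auto
      from IJ obtain k where k: "J = PD k \<or> J = PC k" unfolding P_def by auto
      show "I \<inter> J = {}"
      proof (rule ccontr)
        assume "I \<inter> J \<noteq> {}"
        then obtain x where x: "x \<in> I" "x \<in> J" by auto
        have "int n = int k" using x n k PDfl PCfl by metis
        then have nk: "n = k" by simp
        show False using x n k IJ(3) unfolding nk PD_def PC_def by auto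
      qed
    qed
    show "\<Union>P \<subseteq> X" using inX X by force
    show "finite (X - \<Union>P)"
    proof (rule finite_subset)
      show "finite ({m} \<union> (\<lambda>n. 1 / real n) ` {1..N} \<union> (\<lambda>n. 1 / (real n + \<alpha>)) ` {1..N})" by simp
      show "X - \<Union>P \<subseteq> {m} \<union> (\<lambda>n. 1 / real n) ` {1..N} \<union> (\<lambda>n. 1 / (real n + \<alpha>)) ` {1..N}"
      proof
        fix x assume x: "x \<in> X - \<Union>P"
        show "x \<in> {m} \<union> (\<lambda>n. 1 / real n) ` {1..N} \<union> (\<lambda>n. 1 / (real n + \<alpha>)) ` {1..N}"
        proof (rule ccontr)
          assume nx: "\<not> ?thesis"
          have xm: "m < x" "x \<le> 1" using x nx X by auto
          then have x0: "0 < x" using m0 by linarith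
          define n where "n = nat \<lfloor>1/x\<rfloor>"
          have "1 \<le> 1/x" using xm x0 by (simp add: field_simps)
          then have n: "real n \<le> 1/x" "1/x < real n + 1" "1 \<le> n" unfolding n_def by linarith+
          have "1/x \<le> 1/m" using xm m0 by (simp add: frac_le)
          then have "real n \<le> real N" using n unfolding N_def by linarith
          then have nN: "n \<in> {1..N}" using n by simp
          have "1/x \<noteq> real n"
          proof
            assume "1/x = real n"
            then have "1/(1/x) = 1 / real n" by simp
            then have "x = 1 / real n" by simp
            then show False using nx nN by blast
          qed
          moreover have "1/x \<noteq> real n + \<alpha>"
          proof
            assume "1/x = real n + \<alpha>"
            then have "1/(1/x) = 1 / (real n + \<alpha>)" by simp
            then have "x = 1 / (real n + \<alpha>)" by simp
            then show False using nx nN by blast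
          qed
          ultimately have "x \<in> PD n \<or> x \<in> PC n" using n xm unfolding PD_def PC_def by auto
          then have "x \<in> \<Union>P" unfolding P_def using nN by auto
          then show False using x by simp
        qed
      qed
    qed
    show "\<forall>I\<in>P. continuous_on I T \<and>
           ((\<forall>x\<in>I. \<forall>y\<in>I. x < y \<longrightarrow> T x < T y) \<or> (\<forall>x\<in>I. \<forall>y\<in>I. x < y \<longrightarrow> T y < T x)) \<and>
           (\<forall>x\<in>I. T differentiable at x \<and> deriv T differentiable at x)"
    proof
      fix I assume "I \<in> P"
      from pieces[OF this] obtain a b s c where abs: "I = {a<..<b}" "0 \<le> a" "s = 1 \<or> s = -1"
        "\<forall>y\<in>I. T y = s / y + c" by blast
      note pp = piece_props[OF abs(1,2,3), of T c]
      show "continuous_on I T \<and>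
           ((\<forall>x\<in>I. \<forall>y\<in>I. x < y \<longrightarrow> T x < T y) \<or> (\<forall>x\<in>I. \<forall>y\<in>I. x < y \<longrightarrow> T y < T x)) \<and>
           (\<forall>x\<in>I. T differentiable at x \<and> deriv T differentiable at x)"
        using pp abs(4) unfolding real_differentiable_def by blast
    qed
    show "\<exists>C. \<forall>x\<in>\<Union>P. \<bar>deriv (deriv T) x / (deriv T x)\<^sup>2\<bar> \<le> C"
      using dT by blast
    show "\<exists>Zs\<subseteq>P. \<exists>xZ. (\<forall>Z\<in>Zs. (xZ Z = Inf Z \<or> xZ Z = Sup Z) \<and>
              (T \<longlongrightarrow> xZ Z) (at (xZ Z) within Z) \<and>
              (deriv T \<longlongrightarrow> 1) (at (xZ Z) within Z) \<and>
              (\<forall>x\<in>Z. \<forall>y\<in>Z. x \<le> y \<and> y < xZ Z \<longrightarrow> deriv T y \<le> deriv T x) \<and>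
              (\<forall>x\<in>Z. \<forall>y\<in>Z. xZ Z < x \<and> x \<le> y \<longrightarrow> deriv T x \<le> deriv T y)) \<and>
           (\<forall>\<epsilon>>0. \<exists>\<rho>>1. \<forall>x\<in>\<Union>P. (\<forall>Z\<in>Zs. \<epsilon> \<le> \<bar>x - xZ Z\<bar>) \<longrightarrow> \<rho> \<le> \<bar>deriv T x\<bar>)"
    proof (intro exI[of _ "{Z1}"] exI[of _ "\<lambda>_. 1"] conjI allI impI ballI)
      show "{Z1} \<subseteq> P" using Z1P by simp
      fix Z assume "Z \<in> {Z1}"
      then have ZZ: "Z = Z1" by simp
      show "1 = Inf Z \<or> 1 = Sup Z" using Z1 Z1lt ZZ by simp
      have "((\<lambda>y. 2 - 1/y) \<longlongrightarrow> 2 - 1/1) (at 1 within Z)"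
        by (intro tendsto_intros) auto
      then show "(T \<longlongrightarrow> 1) (at 1 within Z)"
        by (subst Lim_cong_within[where g="\<lambda>y. 2 - 1/y" and y="2 - 1/1"]) (auto simp: ZZ TZ1)
      have "((\<lambda>y. 1/y^2) \<longlongrightarrow> 1/1^2) (at 1 within Z)"
        by (intro tendsto_intros) auto
      then show "(deriv T \<longlongrightarrow> 1) (at 1 within Z)"
        by (subst Lim_cong_within[where g="\<lambda>y. 1/y^2" and y="1/1^2"]) (auto simp: ZZ dTZ1)
      show "deriv T y \<le> deriv T x" if xy: "x \<in> Z" "y \<in> Z" "x \<le> y \<and> y < 1" for x y
      proof -
        have "0 < x" using xy ZZ Z1 m0 by auto
        then have "x^2 \<le> y^2" using xy by (intro power_mono) auto
        then show "deriv T y \<le> deriv T x" using xy ZZ dTZ1 \<open>0 < x\<close> by (simp add: frac_le)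
      qed
      show "deriv T x \<le> deriv T y" if "x \<in> Z" "y \<in> Z" "1 < x \<and> x \<le> y" for x y
        using that ZZ Z1 by auto
    next
      fix \<epsilon> :: real assume e: "0 < \<epsilon>"
      define e where "e = min \<epsilon> (1/2)"
      have e0: "0 < e" "e \<le> 1/2" "e \<le> \<epsilon>" using e unfolding e_def by auto
      show "\<exists>\<rho>>1. \<forall>x\<in>\<Union>P. (\<forall>Z\<in>{Z1}. \<epsilon> \<le> \<bar>x - 1\<bar>) \<longrightarrow> \<rho> \<le> \<bar>deriv T x\<bar>"
      proof (intro exI[of _ "1/(1-e)"] conjI ballI impI)
        show "1 < 1/(1-e)" using e0 by (simp add: field_simps)
        fix x assume x: "x \<in> \<Union>P" "\<forall>Z\<in>{Z1}. \<epsilon> \<le> \<bar>x - 1\<bar>"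
        have x1: "0 < x" "x < 1" using inX[OF x(1)] m0 by auto
        then have "x \<le> 1 - e" using x(2) e0 by auto
        then have "1/(1-e) \<le> 1/x" using x1 by (simp add: frac_le)
        also have "1/x \<le> 1/x^2" using x1 by (simp add: field_simps power2_eq_square)
        finally show "1/(1-e) \<le> \<bar>deriv T x\<bar>" using dT[OF x(1)] by simp
      qed
    qed
  qed
qed

end
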